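(* Let $n$ be an odd positive integer and let $\mathcal{B}$ be a balanced bipartite graph on $2n$ vertices with parts $V_1$ and $V_2$ such that $\delta(\mathcal{B})\geq\frac{n+1}{2}$. Suppose that each of $V_1$ and $V_2$ contains at most one vertex of degree exactly $\frac{n+1}{2}$, i.e. $\max\{|\{v\in V_1: d_{\mathcal{B}}(v)=\frac{n+1}{2}\}|,\ |\{u\in V_2: d_{\mathcal{B}}(u)=\frac{n+1}{2}\}|\}\leq 1$. Then $f(\mathcal{B})=n+1$.
   Context: All graphs are finite and simple. A balanced bipartite graph on $2n$ vertices is a bipartite graph with a given bipartition $(V_1,V_2)$ where $|V_1|=|V_2|=n$. $d_G(v)$ is the degree of $v$ and $\delta(G)$ the minimum degree of $G$. The forest number $f(G)$ is the maximum cardinality of a subset $S\subseteq V(G)$ such that the induced subgraph $G[S]$ is a forest. *)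

theory Defs
  imports Main
begin

definition simple_graph :: "'a set \<Rightarrow> ('a \<Rightarrow> 'a \<Rightarrow> bool) \<Rightarrow> bool" where
  "simple_graph V E \<longleftrightarrow> finite V \<and> (\<forall>u v. E u v \<longrightarrow> u \<in> V \<and> v \<in> V)
     \<and> (\<forall>u v. E u v \<longrightarrow> E v u) \<and> (\<forall>v. \<not> E v v)"

definition balanced_bipartite :: "'a set \<Rightarrow> 'a set \<Rightarrow> ('a \<Rightarrow> 'a \<Rightarrow> bool) \<Rightarrow> nat \<Rightarrow> bool" where
  "balanced_bipartite V1 V2 E n \<longleftrightarrow> simple_graph (V1 \<union> V2) E \<and> V1 \<inter> V2 = {}
     \<and> card V1 = n \<and> card V2 = n
     \<and> (\<forall>u v. E u v \<longrightarrow> (u \<in> V1 \<and> v \<in> V2) \<or> (u \<in> V2 \<and> v \<in> V1))"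

definition degree :: "'a set \<Rightarrow> ('a \<Rightarrow> 'a \<Rightarrow> bool) \<Rightarrow> 'a \<Rightarrow> nat" where
  "degree V E v = card {u \<in> V. E v u}"

definition min_degree :: "'a set \<Rightarrow> ('a \<Rightarrow> 'a \<Rightarrow> bool) \<Rightarrow> nat" where
  "min_degree V E = Min (degree V E ` V)"

definition is_cycle_in :: "'a set \<Rightarrow> ('a \<Rightarrow> 'a \<Rightarrow> bool) \<Rightarrow> 'a list \<Rightarrow> bool" where
  "is_cycle_in S E cs \<longleftrightarrow> length cs \<ge> 3 \<and> distinct cs \<and> set cs \<subseteq> S
     \<and> (\<forall>i. Suc i < length cs \<longrightarrow> E (cs ! i) (cs ! Suc i))
     \<and> E (last cs) (hd cs)"

definition induces_forest :: "'a set \<Rightarrow> ('a \<Rightarrow> 'a \<Rightarrow> bool) \<Rightarrow> 'a set \<Rightarrow> bool" where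
  "induces_forest V E S \<longleftrightarrow> S \<subseteq> V \<and> \<not> (\<exists>cs. is_cycle_in S E cs)"

definition forest_number :: "'a set \<Rightarrow> ('a \<Rightarrow> 'a \<Rightarrow> bool) \<Rightarrow> nat" where
  "forest_number V E = Max (card ` {S. induces_forest V E S})"

end

theory Submission
  imports Defs
begin

lemma cycle_mono: "is_cycle_in S E cs \<Longrightarrow> S \<subseteq> T \<Longrightarrow> is_cycle_in T E cs"
  unfolding is_cycle_in_def by auto

lemma cycle_exists:
  assumes fin: "finite S" and sym: "\<forall>u v. E u v \<longrightarrow> E v u" and irr: "\<forall>v. \<not> E v v"
    and deg: "\<forall>v\<in>S. 2 \<le> card {u\<in>S. E v u}" and ne: "S \<noteq> {}"
  shows "\<exists>cs. is_cycle_in S E cs"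
proof -
  define P where "P xs \<longleftrightarrow> xs \<noteq> [] \<and> distinct xs \<and> set xs \<subseteq> S \<and>
     (\<forall>i. Suc i < length xs \<longrightarrow> E (xs!i) (xs!Suc i))" for xs
  define Q where "Q m \<longleftrightarrow> (\<exists>xs. P xs \<and> length xs = m)" for m
  obtain v where v: "v \<in> S" using ne by auto
  have "P [v]" using v unfolding P_def by auto
  hence "Q 1" unfolding Q_def by force
  moreover have "\<forall>y. Q y \<longrightarrow> y \<le> card S"
    unfolding Q_def P_def using fin by (metis card_mono distinct_card)
  ultimately obtain m where "Q m" and mmax: "\<forall>y. Q y \<longrightarrow> y \<le> m"
    using Nat.ex_has_greatest_nat[of Q 1 "card S"] by blast
  then obtain xs where Pxs: "P xs" and lxs: "length xs = m" unfolding Q_def by blast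
  define N where "N = {u\<in>S. E (xs!0) u}"
  have x0S: "xs!0 \<in> S" using Pxs unfolding P_def by (metis length_greater_0_conv nth_mem subsetD)
  have "N - {xs!1} \<noteq> {}"
  proof
    assume "N - {xs!1} = {}"
    hence "N \<subseteq> {xs!1}" by auto
    hence "card N \<le> 1" by (metis card.empty card.insert card_mono empty_iff finite.intros le_SucI
      le_refl One_nat_def)
    thus False using deg x0S unfolding N_def by fastforce
  qed
  then obtain u where uN: "u \<in> N" and u1: "u \<noteq> xs!1" by auto
  show ?thesis
  proof (cases "u \<in> set xs")
    case False
    have "P (u # xs)" unfolding P_def
    proof (intro conjI allI impI)
      show "distinct (u # xs)" using False Pxs unfolding P_def by auto
      show "set (u # xs) \<subseteq> S" using uN Pxs unfolding P_def N_def by auto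
      fix i assume i: "Suc i < length (u # xs)"
      show "E ((u # xs) ! i) ((u # xs) ! Suc i)"
      proof (cases i)
        case 0 then show ?thesis using uN sym unfolding N_def by auto
      next
        case (Suc j) then show ?thesis using Pxs i unfolding P_def by auto
      qed
    qed simp
    hence "Q (Suc m)" unfolding Q_def using lxs by auto
    thus ?thesis using mmax by fastforce
  next
    case True
    then obtain j where j: "j < length xs" "u = xs!j" by (metis in_set_conv_nth)
    have "j \<noteq> 0" using j uN irr unfolding N_def by (metis mem_Collect_eq)
    moreover have "j \<noteq> 1" using j u1 by auto
    ultimately have j2: "j \<ge> 2" by auto
    define cs where "cs = take (Suc j) xs"
    have "is_cycle_in S E cs" unfolding is_cycle_in_def
    proof (intro conjI allI impI)
      show "3 \<le> length cs" using j j2 unfolding cs_def by auto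
      show "distinct cs" using Pxs unfolding cs_def P_def by auto
      show "set cs \<subseteq> S" using Pxs unfolding cs_def P_def by (meson order_trans set_take_subset)
      fix i assume "Suc i < length cs"
      thus "E (cs ! i) (cs ! Suc i)" using Pxs unfolding cs_def P_def by auto
    next
      have "last cs = xs!j" unfolding cs_def using j by (subst last_conv_nth) auto
      moreover have "hd cs = xs!0" unfolding cs_def using j by (cases xs) auto
      ultimately show "E (last cs) (hd cs)" using uN j sym unfolding N_def by auto
    qed
    thus ?thesis by blast
  qed
qed

lemma card_split_v:
  assumes "finite S" "v \<in> S"
  shows "card {u\<in>S. E w u} = card {u\<in>S - {v}. E w u} + (if E w v then 1 else 0)"
proof (cases "E w v")
  case True
  have "{u\<in>S. E w u} = insert v {u\<in>S - {v}. E w u}" using True assms by auto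
  thus ?thesis using True assms by simp
next
  case False
  have "{u\<in>S. E w u} = {u\<in>S - {v}. E w u}" using False by auto
  thus ?thesis using False by simp
qed

lemma cycle_from_sum:
  assumes "finite S" and sym: "\<forall>u v. E u v \<longrightarrow> E v u" and irr: "\<forall>v. \<not> E v v"
    and "S \<noteq> {}" and "2 * card S \<le> (\<Sum>v\<in>S. card {u\<in>S. E v u})"
  shows "\<exists>cs. is_cycle_in S E cs"
  using assms(1,4,5)
proof (induction "card S" arbitrary: S rule: less_induct)
  case less
  show ?case
  proof (cases "\<exists>v\<in>S. card {u\<in>S. E v u} \<le> 1")
    case False
    thus ?thesis using cycle_exists[of S E] less.prems sym irr by force
  next
    case True
    then obtain v where v: "v \<in> S" "card {u\<in>S. E v u} \<le> 1" by auto
    define S' where "S' = S - {v}"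
    have fin': "finite S'" using less.prems unfolding S'_def by auto
    have sumsplit: "(\<Sum>w\<in>S. card {u\<in>S. E w u}) =
        (\<Sum>w\<in>S. card {u\<in>S'. E w u}) + (\<Sum>w\<in>S. (if E w v then 1 else 0))"
      unfolding S'_def using card_split_v[OF less.prems(1) v(1), where E=E] by (simp add: sum.distrib)
    have "(\<Sum>w\<in>S. (if E w v then 1 else 0)) = card {w\<in>S. E w v}"
      using less.prems(1) by (simp add: sum.inter_filter[symmetric])
    also have "{w\<in>S. E w v} = {u\<in>S. E v u}" using sym by auto
    finally have s2: "(\<Sum>w\<in>S. (if E w v then 1 else 0)) \<le> (1::nat)" using v by linarith
    have s1: "(\<Sum>w\<in>S. card {u\<in>S'. E w u}) = (\<Sum>w\<in>S'. card {u\<in>S'. E w u}) + card {u\<in>S'. E v u}"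
      unfolding S'_def using less.prems(1) v(1) by (simp add: sum.remove add.commute)
    have "card {u\<in>S'. E v u} \<le> card {u\<in>S. E v u}"
      using less.prems(1) unfolding S'_def by (intro card_mono) auto
    hence s3: "card {u\<in>S'. E v u} \<le> 1" using v by simp
    have cS: "card S = Suc (card S')" unfolding S'_def using less.prems(1) v(1)
      by (simp add: card_Suc_Diff1 del: card_Diff_insert)
    have ne': "S' \<noteq> {}"
    proof
      assume "S' = {}"
      hence "S = {v}" unfolding S'_def using v by auto
      moreover have "{u\<in>{v}. E v u} = {}" using irr by auto
      ultimately have "(\<Sum>w\<in>S. card {u\<in>S. E w u}) = 0" by simp
      moreover have "card S = 1" using \<open>S = {v}\<close> by simp
      ultimately show False using less.prems(3) by linarith
    qed
    have "2 * card S' \<le> (\<Sum>w\<in>S'. card {u\<in>S'. E w u})"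
      using less.prems(3) sumsplit s1 s2 s3 cS by linarith
    then obtain cs where "is_cycle_in S' E cs"
      using less.hyps[of S'] cS fin' ne' by auto
    thus ?thesis using cycle_mono[of S' E cs S] unfolding S'_def by auto
  qed
qed

lemma arith_key:
  fixes s L n D T Z :: nat
  assumes "s * (n+3) \<le> 2*T + 2" "T + s*L \<le> D + s*n" "s + L = n + 2" "2*s \<le> n+2" "L \<le> n"
  shows "n + 2 \<le> D"
proof -
  have s2: "s \<ge> 2" using assms by linarith
  have p: "(int s - 2) * (int n + 3 - 2 * int s) \<ge> 0" using s2 assms(4) by simp
  have q: "int s * int L + int s * int s = int s * int n + 2 * int s"
  proof -
    have "int s * (int L + int s) = int s * (int n + 2)" using assms(3) by simp
    thus ?thesis by (simp add: algebra_simps)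
  qed
  have a1: "int s * (int n + 3) \<le> 2 * int T + 2" using assms(1)
    by (metis (mono_tags) of_nat_add of_nat_le_iff of_nat_mult of_nat_numeral)
  have a2: "int T + int s * int L \<le> int D + int s * int n" using assms(2)
    by (metis of_nat_add of_nat_le_iff of_nat_mult)
  from p have p': "int s * int n + 7 * int s - 2 * (int s * int s) - 2 * int n - 6 \<ge> 0"
    by (simp add: algebra_simps)
  have "int n + 2 \<le> int D"
    using a1 a2 q p' by (simp add: algebra_simps)
  thus ?thesis by simp
qed

lemma side_bound:
  fixes X Y V A B :: "'a set" and n :: nat
  assumes finV: "finite V" and YV: "Y \<subseteq> V" and finY: "finite Y" and cY: "card Y = n" and odd: "odd n"
    and nbr: "\<forall>x\<in>A. \<forall>u. E x u \<longrightarrow> u \<in> Y"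
    and mind: "\<forall>x\<in>A. n+1 \<le> 2*card{u\<in>V. E x u}"
    and D1: "card {x\<in>X. 2*card{u\<in>V. E x u} = n+1} \<le> 1" and finX: "finite X" and AX: "A \<subseteq> X"
    and BY: "B \<subseteq> Y" and cAB: "card A + card B = n+2" and sm: "2*card A \<le> n+2"
  shows "n+2 \<le> (\<Sum>x\<in>A. card {u\<in>B. E x u})"
proof -
  define Deg where "Deg = {x\<in>X. 2*card{u\<in>V. E x u} = n+1}"
  have finA: "finite A" using finX AX finite_subset by blast
  have finB: "finite B" using finY BY finite_subset by blast
  have cB: "card B \<le> n" using card_mono[OF finY BY] cY by simp
  have h1: "card{u\<in>V. E x u} + card B \<le> card{u\<in>B. E x u} + n" if x: "x \<in> A" for x
  proof -
    have e: "{u\<in>V. E x u} = {u\<in>Y. E x u}" using nbr x YV by auto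
    have "{u\<in>Y. E x u} \<subseteq> {u\<in>B. E x u} \<union> (Y - B)" by auto
    hence "card {u\<in>Y. E x u} \<le> card ({u\<in>B. E x u} \<union> (Y - B))"
      using finY finB by (intro card_mono) auto
    also have "\<dots> \<le> card {u\<in>B. E x u} + card (Y - B)" by (rule card_Un_le)
    also have "card (Y - B) = n - card B" using card_Diff_subset[OF finB BY] cY by simp
    finally show ?thesis using e cB by simp
  qed
  have h2: "n+3 \<le> 2*card{u\<in>V. E x u} + 2*(if x \<in> Deg then 1 else 0)" if x: "x \<in> A" for x
  proof (cases "x \<in> Deg")
    case True then show ?thesis using mind x by auto
  next
    case False
    hence "2*card{u\<in>V. E x u} \<noteq> n+1" using x AX unfolding Deg_def by auto
    moreover have "n+1 \<le> 2*card{u\<in>V. E x u}" using mind x by auto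
    ultimately show ?thesis using odd False by presburger
  qed
  define T where "T = (\<Sum>x\<in>A. card{u\<in>V. E x u})"
  define D where "D = (\<Sum>x\<in>A. card {u\<in>B. E x u})"
  have S1: "T + card A * card B \<le> D + card A * n"
  proof -
    have "(\<Sum>x\<in>A. card{u\<in>V. E x u} + card B) \<le> (\<Sum>x\<in>A. card{u\<in>B. E x u} + n)"
      using h1 by (rule sum_mono)
    thus ?thesis unfolding T_def D_def by (simp add: sum.distrib mult.commute)
  qed
  have cd: "(\<Sum>x\<in>A. (if x \<in> Deg then 1 else 0)) \<le> (1::nat)"
  proof -
    have "(\<Sum>x\<in>A. (if x \<in> Deg then 1 else 0)) = card {x\<in>A. x \<in> Deg}"
      using finA by (simp add: sum.inter_filter[symmetric])
    also have "\<dots> \<le> card Deg" using finX unfolding Deg_def by (intro card_mono) auto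
    finally show ?thesis using D1 unfolding Deg_def by simp
  qed
  have S2: "card A * (n+3) \<le> 2*T + 2"
  proof -
    have "(\<Sum>x\<in>A. n+3) \<le> (\<Sum>x\<in>A. 2*card{u\<in>V. E x u} + 2*(if x \<in> Deg then 1 else 0))"
      using h2 by (rule sum_mono)
    also have "\<dots> = 2*T + 2*(\<Sum>x\<in>A. (if x \<in> Deg then 1 else 0))"
      unfolding T_def by (simp add: sum.distrib sum_distrib_left)
    finally show ?thesis using cd by (simp add: mult.commute)
  qed
  show ?thesis using arith_key[OF S2 S1 cAB sm cB] unfolding D_def .
qed

lemma double_count:
  assumes "finite A" "finite B" and sym: "\<forall>u v. E u v \<longrightarrow> E v u"
  shows "(\<Sum>a\<in>A. card {b\<in>B. E a b}) = (\<Sum>b\<in>B. card {a\<in>A. E b a})"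
proof -
  have "(\<Sum>a\<in>A. card {b\<in>B. E a b}) = (\<Sum>a\<in>A. \<Sum>b\<in>B. (if E a b then 1 else 0))"
    using assms(2) by (simp add: sum.inter_filter[symmetric])
  also have "\<dots> = (\<Sum>b\<in>B. \<Sum>a\<in>A. (if E a b then 1 else 0))" by (rule sum.swap)
  also have "\<dots> = (\<Sum>b\<in>B. \<Sum>a\<in>A. (if E b a then 1 else 0))"
    using sym by (intro sum.cong refl) metis
  also have "\<dots> = (\<Sum>b\<in>B. card {a\<in>A. E b a})"
    using assms(1) by (simp add: sum.inter_filter[symmetric])
  finally show ?thesis .
qed

theorem theorem2p8:
  fixes V1 V2 :: "'a set" and E :: "'a \<Rightarrow> 'a \<Rightarrow> bool" and n :: nat
  assumes "odd n" and "n > 0"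
    and "balanced_bipartite V1 V2 E n"
    and "2 * min_degree (V1 \<union> V2) E \<ge> n + 1"
    and "card {v \<in> V1. 2 * degree (V1 \<union> V2) E v = n + 1} \<le> 1"
    and "card {u \<in> V2. 2 * degree (V1 \<union> V2) E u = n + 1} \<le> 1"
  shows "forest_number (V1 \<union> V2) E = n + 1"
proof -
  define V where "V = V1 \<union> V2"
  have finV: "finite V" and inV: "\<forall>u v. E u v \<longrightarrow> u \<in> V \<and> v \<in> V"
    and sym: "\<forall>u v. E u v \<longrightarrow> E v u" and irr: "\<forall>v. \<not> E v v"
    and disj: "V1 \<inter> V2 = {}" and c1: "card V1 = n" and c2: "card V2 = n"
    and bip: "\<forall>u v. E u v \<longrightarrow> (u \<in> V1 \<and> v \<in> V2) \<or> (u \<in> V2 \<and> v \<in> V1)"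
    using assms(3) unfolding balanced_bipartite_def simple_graph_def V_def by auto
  have fin1: "finite V1" and fin2: "finite V2" using finV unfolding V_def by auto
  have mind: "n + 1 \<le> 2 * card {u\<in>V. E x u}" if "x \<in> V" for x
  proof -
    have "min_degree V E \<le> degree V E x"
      unfolding min_degree_def using finV that by (intro Min_le) auto
    thus ?thesis using assms(4) unfolding V_def degree_def by auto
  qed
  define F where "F = {S. induces_forest V E S}"
  have "F \<subseteq> Pow V" unfolding F_def induces_forest_def by auto
  hence finF: "finite F" using finV finite_subset by blast
  obtain b where b: "b \<in> V2" using c2 assms(2) by (metis card.empty ex_in_conv not_less0)
  define W where "W = insert b V1"
  have bV1: "b \<notin> V1" using b disj by auto
  have cW: "card W = n + 1" unfolding W_def using bV1 fin1 c1 by simp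
  have Wforest: "induces_forest V E W"
    unfolding induces_forest_def
  proof (intro conjI notI)
    show "W \<subseteq> V" unfolding W_def V_def using b by auto
    assume "\<exists>cs. is_cycle_in W E cs"
    then obtain cs where cs: "is_cycle_in W E cs" by blast
    have ed: "x = b \<or> y = b" if "E x y" "x \<in> W" "y \<in> W" for x y
      using that bip disj unfolding W_def by blast
    have l3: "length cs \<ge> 3" and dis: "distinct cs" and sW: "set cs \<subseteq> W"
      and adj: "\<forall>i. Suc i < length cs \<longrightarrow> E (cs!i) (cs!Suc i)" and cl: "E (last cs) (hd cs)"
      using cs unfolding is_cycle_in_def by auto
    have inW: "cs!i \<in> W" if "i < length cs" for i using that sW nth_mem by blast
    have neq: "cs!i \<noteq> cs!j" if "i < length cs" "j < length cs" "i \<noteq> j" for i j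
      using dis that nth_eq_iff_index_eq by blast
    have w0: "cs!0 \<in> W" and w1: "cs!1 \<in> W" and w2: "cs!2 \<in> W"
    proof -
      have "0 < length cs" "1 < length cs" "2 < length cs" using l3 by auto
      thus "cs!0 \<in> W" "cs!1 \<in> W" "cs!2 \<in> W" using inW by blast+
    qed
    have a01: "E (cs!0) (cs!1)" and a12: "E (cs!1) (cs!2)"
      using adj[rule_format, of 0] adj[rule_format, of 1] l3 by (auto simp: numeral_2_eq_2)
    have lt: "0 < length cs" "1 < length cs" "2 < length cs" using l3 by auto
    have d02: "cs!0 \<noteq> cs!2" and d12: "cs!1 \<noteq> cs!2" and d01: "cs!0 \<noteq> cs!1"
      using neq[OF lt(1) lt(3)] neq[OF lt(2) lt(3)] neq[OF lt(1) lt(2)] by auto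
    have e01: "cs!0 = b \<or> cs!1 = b" using ed[OF a01 w0 w1] .
    have e12: "cs!1 = b \<or> cs!2 = b" using ed[OF a12 w1 w2] .
    have b1: "cs!1 = b" using e01 e12 d02 by auto
    show False
    proof (cases "length cs = 3")
      case True
      have "last cs = cs!2" using True lt by (subst last_conv_nth) auto
      moreover have "hd cs = cs!0" using l3 by (cases cs) auto
      ultimately have "cs!2 = b \<or> cs!0 = b" using ed[of "cs!2" "cs!0"] cl w0 w2 True by auto
      thus False using b1 d12 d01 by auto
    next
      case False
      hence l4: "length cs \<ge> 4" using l3 by auto
      have "cs!2 = b \<or> cs!3 = b" using ed[of "cs!2" "cs!3"] adj[rule_format, of 2] w2 inW[of 3] l4
        by (auto simp: numeral_3_eq_3 numeral_2_eq_2)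
      thus False using b1 d12 neq[OF lt(2), of 3] l4 by auto
    qed
  qed
  have upper: "card S \<le> n + 1" if SF: "S \<in> F" for S
  proof (rule ccontr)
    assume "\<not> card S \<le> n + 1"
    hence "n + 2 \<le> card S" by simp
    then obtain T where TS: "T \<subseteq> S" and cT: "card T = n + 2"
      by (meson obtain_subset_with_card_n)
    have SV: "S \<subseteq> V" using SF unfolding F_def induces_forest_def by auto
    hence TV: "T \<subseteq> V" using TS by auto
    have finT: "finite T" using TV finV finite_subset by blast
    define A where "A = T \<inter> V1"
    define B where "B = T \<inter> V2"
    have finA: "finite A" and finB: "finite B" unfolding A_def B_def using finT by auto
    have TAB: "T = A \<union> B" and dAB: "A \<inter> B = {}" unfolding A_def B_def using TV disj V_def by auto
    have cAB: "card A + card B = n + 2" using cT TAB dAB finA finB card_Un_disjoint by metis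
    have nA: "{u\<in>T. E v u} = {u\<in>B. E v u}" if "v \<in> A" for v
      using that bip disj unfolding A_def B_def by blast
    have nB: "{u\<in>T. E v u} = {u\<in>A. E v u}" if "v \<in> B" for v
      using that bip disj unfolding A_def B_def by blast
    have sumT: "(\<Sum>v\<in>T. card {u\<in>T. E v u}) =
        (\<Sum>v\<in>A. card {u\<in>B. E v u}) + (\<Sum>v\<in>B. card {u\<in>A. E v u})"
      unfolding TAB using finA finB dAB nA nB TAB
      by (simp add: sum.union_disjoint)
    have dc: "(\<Sum>v\<in>A. card {u\<in>B. E v u}) = (\<Sum>v\<in>B. card {u\<in>A. E v u})"
      using double_count[OF finA finB sym] .
    have big: "n + 2 \<le> (\<Sum>v\<in>A. card {u\<in>B. E v u})"
    proof (cases "2 * card A \<le> n + 2")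
      case True
      show ?thesis
      proof (rule side_bound[where X=V1 and Y=V2 and V=V])
        show "finite V" "V2 \<subseteq> V" "finite V2" "card V2 = n" "odd n" "finite V1" "A \<subseteq> V1" "B \<subseteq> V2"
          "card A + card B = n + 2" "2 * card A \<le> n + 2"
          using finV fin2 c2 assms(1) fin1 True cAB unfolding V_def A_def B_def by auto
        show "\<forall>x\<in>A. \<forall>u. E x u \<longrightarrow> u \<in> V2" using bip disj unfolding A_def by blast
        show "\<forall>x\<in>A. n + 1 \<le> 2 * card {u \<in> V. E x u}" using mind TV unfolding A_def by auto
        show "card {x \<in> V1. 2 * card {u \<in> V. E x u} = n + 1} \<le> 1"
          using assms(5) unfolding degree_def V_def .
      qed
    next
      case False
      hence F2: "2 * card B \<le> n + 2" using cAB by linarith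
      have "n + 2 \<le> (\<Sum>v\<in>B. card {u\<in>A. E v u})"
      proof (rule side_bound[where X=V2 and Y=V1 and V=V])
        show "finite V" "V1 \<subseteq> V" "finite V1" "card V1 = n" "odd n" "finite V2" "B \<subseteq> V2" "A \<subseteq> V1"
          "card B + card A = n + 2" "2 * card B \<le> n + 2"
          using finV fin1 c1 assms(1) fin2 F2 cAB unfolding V_def A_def B_def by auto
        show "\<forall>x\<in>B. \<forall>u. E x u \<longrightarrow> u \<in> V1" using bip disj unfolding B_def by blast
        show "\<forall>x\<in>B. n + 1 \<le> 2 * card {u \<in> V. E x u}" using mind TV unfolding B_def by auto
        show "card {x \<in> V2. 2 * card {u \<in> V. E x u} = n + 1} \<le> 1"
          using assms(6) unfolding degree_def V_def .
      qed
      thus ?thesis using dc by simp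
    qed
    have "2 * card T \<le> (\<Sum>v\<in>T. card {u\<in>T. E v u})" using sumT dc big cT by linarith
    moreover have "T \<noteq> {}" using cT by auto
    ultimately obtain cs where "is_cycle_in T E cs" using cycle_from_sum[OF finT sym irr] by blast
    hence "is_cycle_in S E cs" using cycle_mono TS by blast
    thus False using SF unfolding F_def induces_forest_def by blast
  qed
  have "Max (card ` F) = n + 1"
  proof (rule Max_eqI)
    show "finite (card ` F)" using finF by simp
    show "\<And>y. y \<in> card ` F \<Longrightarrow> y \<le> n + 1" using upper by auto
    show "n + 1 \<in> card ` F" using Wforest cW unfolding F_def by force
  qed
  thus ?thesis unfolding forest_number_def F_def V_def .
qed

end
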